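(* Let $\mathbf F$ be a nonincreasing foliage tree and $\varphi$ a consistent family of foliage grafts for $\mathbf F$ such that $\mathrm{fhybr}(\mathbf F,\varphi)$ has nonempty leaves and each $\mathbf G\in\varphi$ preserves shoots of $\mathbf F$. Then $\mathrm{fhybr}(\mathbf F,\varphi)$ shoots into $\mathbf F$.
   Context: Trees: a tree is a pair $(Q,<)$ with $<$ irreflexive transitive and predecessor sets well-ordered; $\parallel$ = incomparable; $\mathrm{sons}(x)$ = immediate successors; $\max$ = maximal nodes; $0$ = least node; $A{\downarrow}=\{v:\exists a\in A\ a\le v\}$; for an antichain $A$ and $x\in A{\downarrow}$, $\mathrm{root}(x,A)$ is the unique $r\in A$ with $r\le x$. A graft for a tree $\mathcal T$ is a tree $\mathcal G$ with more than one node, least node $0_{\mathcal G}\in\mathrm{nodes}\,\mathcal T$, $\max\mathcal G\subseteq\{v\in\mathrm{nodes}\,\mathcal T:v>_{\mathcal T}0_{\mathcal G}\}$ an antichain in $\mathcal T$, and $\mathrm{impl}\,\mathcal G:=\mathrm{nodes}\,\mathcal G\setminus(\{0_{\mathcal G}\}\cup\max\mathcal G)$ disjoint from $\mathrm{nodes}\,\mathcal T$; $\mathrm{expl}(\mathcal T,\mathcal G)=\{v:v>_{\mathcal T}0_{\mathcal G}\}\setminus(\max\mathcal G){\downarrow}_{\mathcal T}$. A consistent family $\gamma$ of grafts for $\mathcal T$: members are grafts with pairwise disjoint implants, and for distinct $\mathcal D,\mathcal E$: $0_{\mathcal D}\parallel_{\mathcal T}0_{\mathcal E}$ or $0_{\mathcal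 D}\in(\max\mathcal E){\downarrow}_{\mathcal T}$ or $0_{\mathcal E}\in(\max\mathcal D){\downarrow}_{\mathcal T}$. $\mathrm{supp}(\mathcal T,\gamma)=\mathrm{nodes}\,\mathcal T\setminus\bigcup_{\mathcal G\in\gamma}\mathrm{expl}(\mathcal T,\mathcal G)$. $\mathrm{hybr}(\mathcal T,\gamma)$ is the tree on $\mathrm{supp}(\mathcal T,\gamma)\cup\bigcup_{\mathcal G\in\gamma}\mathrm{impl}\,\mathcal G$ with $x<y$ iff: (b1) $x,y\in\mathrm{supp}$, $x<_{\mathcal T}y$; (b2) $x,y\in\mathrm{impl}\,\mathcal G$, $x<_{\mathcal G}y$; (b3) $x\in\mathrm{supp}$, $y\in\mathrm{impl}\,\mathcal G$, $x\le_{\mathcal T}0_{\mathcal G}$; (b4) $x\in\mathrm{impl}\,\mathcal G$, $y\in\mathrm{supp}\cap(\max\mathcal G){\downarrow}_{\mathcal T}$, $x<_{\mathcal G}\mathrm{root}_{\mathcal T}(y,\max\mathcal G)$; or (b5) $x\in\mathrm{impl}\,\mathcal D$, $y\in\mathrm{impl}\,\mathcal E$ ($\mathcal D\ne\mathcal E$), $0_{\mathcal E}\in(\max\mathcal D){\downarrow}_{\mathcal T}$, $x<_{\mathcal D}\mathrm{root}_{\mathcal T}(0_{\mathcal E},\max\mathcal D)$. Foliage trees: $\mathbf F=(\mathcal T,l)$ with skeleton $\mathcal T$ and leaves $\mathbf F_x=l(x)$; nonincreasing: $x\le y\Rightarrow\mathbf F_y\subseteq\mathbf F_x$; nonempty leaves: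 every leaf nonempty; $\mathrm{flesh}\,\mathbf F=\bigcup_x\mathbf F_x$; $\mathrm{shoot}_{\mathbf F}(z)=\{\bigcup_{s\in C}\mathbf F_s:C$ cofinite subset of $\mathrm{sons}(z)\}$; $\mathrm{scope}_{\mathbf F}(p)=\{y:p\in\mathbf F_y\}$; $\gamma\gg\delta$ means every nonempty $D\in\delta$ contains some nonempty $G\in\gamma$. A foliage graft for nonincreasing $\mathbf F$ is a nonincreasing foliage tree $\mathbf G$ with skeleton a graft for the skeleton of $\mathbf F$, $\mathbf G_{0_{\mathbf G}}\subseteq\mathbf F_{0_{\mathbf G}}$, and $\mathbf G_m=\mathbf F_m$ for $m\in\max\mathbf G$; $\mathrm{cut}(\mathbf F,\mathbf G)=\mathbf F_{0_{\mathbf G}}\setminus\mathbf G_{0_{\mathbf G}}$; $\mathrm{impl}\,\mathbf G$, $\mathrm{expl}(\mathbf F,\mathbf G)$ refer to skeletons. $\varphi$ is a consistent family of foliage grafts for $\mathbf F$ if its members are foliage grafts for $\mathbf F$ with pairwise distinct skeletons forming a consistent family of grafts for the skeleton of $\mathbf F$; $\mathrm{loss}(\mathbf F,\varphi)=\bigcup_{\mathbf G\in\varphi}\mathrm{cut}(\mathbf F,\mathbf G)$; $\mathrm{supp}(\mathbf F,\varphi)$ is the support of the skeleton of $\mathbf F$ for the family of skeletons. $\mathrm{fhybr}(\mathbf F,\varphi)$ is the foliage tree $\mathbf H$ whose skeleton is the hybrid of the skeleton of $\mathbf F$ and the skeletons of members of $\varphi$, with leaves $\mathbf H_x=\mathbf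 G_x\setminus\mathrm{loss}(\mathbf F,\varphi)$ if $x\in\mathrm{impl}\,\mathbf G$, $\mathbf G\in\varphi$, and $\mathbf H_x=\mathbf F_x\setminus\mathrm{loss}(\mathbf F,\varphi)$ if $x\in\mathrm{supp}(\mathbf F,\varphi)$. A foliage graft $\mathbf G$ preserves shoots of $\mathbf F$ iff for each $p\in\mathrm{flesh}\,\mathbf G$ and each $y\in\mathrm{scope}_{\mathbf F}(p)\cap(\{0_{\mathbf G}\}\cup\mathrm{expl}(\mathbf F,\mathbf G))$ there is $x\in\mathrm{scope}_{\mathbf G}(p)\cap(\{0_{\mathbf G}\}\cup\mathrm{impl}\,\mathbf G)$ with $\mathrm{shoot}_{\mathbf G}(x)\gg\mathrm{shoot}_{\mathbf F}(y)$. $\mathbf H$ shoots into $\mathbf F$ iff for every $p\in\mathrm{flesh}\,\mathbf H$ and every $y\in\mathrm{scope}_{\mathbf F}(p)$ there is $x\in\mathrm{scope}_{\mathbf H}(p)$ with $\mathrm{shoot}_{\mathbf H}(x)\gg\mathrm{shoot}_{\mathbf F}(y)$. *)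

theory Defs
  imports Main
begin

text \<open>A tree is a pair (set of nodes, strict order relation). Nodes of all trees
involved live in one common type 'a, so that grafts and hybrids can be formed.\<close>

type_synonym 'a tree = "'a set \<times> ('a \<Rightarrow> 'a \<Rightarrow> bool)"

definition nodes :: "'a tree \<Rightarrow> 'a set" where
  "nodes T = fst T"

definition tlt :: "'a tree \<Rightarrow> 'a \<Rightarrow> 'a \<Rightarrow> bool" where
  "tlt T = snd T"

definition tle :: "'a tree \<Rightarrow> 'a \<Rightarrow> 'a \<Rightarrow> bool" where
  "tle T x y \<longleftrightarrow> tlt T x y \<or> x = y"

definition tpar :: "'a tree \<Rightarrow> 'a \<Rightarrow> 'a \<Rightarrow> bool" where
  "tpar T x y \<longleftrightarrow> \<not> tle T x y \<and> \<not> tle T y x"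

definition is_tree :: "'a tree \<Rightarrow> bool" where
  "is_tree T \<longleftrightarrow>
     (\<forall>x y. tlt T x y \<longrightarrow> x \<in> nodes T \<and> y \<in> nodes T) \<and>
     (\<forall>x. \<not> tlt T x x) \<and>
     (\<forall>x y z. tlt T x y \<longrightarrow> tlt T y z \<longrightarrow> tlt T x z) \<and>
     (\<forall>x \<in> nodes T.
        (\<forall>y z. tlt T y x \<longrightarrow> tlt T z x \<longrightarrow> tlt T y z \<or> y = z \<or> tlt T z y) \<and>
        wf {(y, z). tlt T y z \<and> tlt T z x})"

definition sons :: "'a tree \<Rightarrow> 'a \<Rightarrow> 'a set" where
  "sons T z = {s \<in> nodes T. tlt T z s \<and> \<not> (\<exists>w. tlt T z w \<and> tlt T w s)}"

definition maxs :: "'a tree \<Rightarrow> 'a set" where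
  "maxs T = {x \<in> nodes T. \<not> (\<exists>y. tlt T x y)}"

definition has_least :: "'a tree \<Rightarrow> bool" where
  "has_least T \<longleftrightarrow> (\<exists>r \<in> nodes T. \<forall>x \<in> nodes T. tle T r x)"

definition zero :: "'a tree \<Rightarrow> 'a" where
  "zero T = (THE r. r \<in> nodes T \<and> (\<forall>x \<in> nodes T. tle T r x))"

definition down :: "'a tree \<Rightarrow> 'a set \<Rightarrow> 'a set" where
  "down T A = {v \<in> nodes T. \<exists>a \<in> A. tle T a v}"

definition root :: "'a tree \<Rightarrow> 'a \<Rightarrow> 'a set \<Rightarrow> 'a" where
  "root T x A = (THE r. r \<in> A \<and> tle T r x)"

definition antichain :: "'a tree \<Rightarrow> 'a set \<Rightarrow> bool" where
  "antichain T A \<longleftrightarrow> A \<subseteq> nodes T \<and> (\<forall>a \<in> A. \<forall>b \<in> A. a \<noteq> b \<longrightarrow> tpar T a b)"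

definition impl :: "'a tree \<Rightarrow> 'a set" where
  "impl G = nodes G - ({zero G} \<union> maxs G)"

definition is_graft :: "'a tree \<Rightarrow> 'a tree \<Rightarrow> bool" where
  "is_graft T G \<longleftrightarrow> is_tree G \<and> (\<exists>x \<in> nodes G. \<exists>y \<in> nodes G. x \<noteq> y) \<and>
     has_least G \<and> zero G \<in> nodes T \<and>
     maxs G \<subseteq> {v \<in> nodes T. tlt T (zero G) v} \<and> antichain T (maxs G) \<and>
     impl G \<inter> nodes T = {}"

definition expl :: "'a tree \<Rightarrow> 'a tree \<Rightarrow> 'a set" where
  "expl T G = {v \<in> nodes T. tlt T (zero G) v} - down T (maxs G)"

definition consistent_grafts :: "'a tree \<Rightarrow> 'a tree set \<Rightarrow> bool" where
  "consistent_grafts T \<gamma> \<longleftrightarrow> (\<forall>G \<in> \<gamma>. is_graft T G) \<and>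
     (\<forall>D \<in> \<gamma>. \<forall>E \<in> \<gamma>. D \<noteq> E \<longrightarrow>
        impl D \<inter> impl E = {} \<and>
        (tpar T (zero D) (zero E) \<or> zero D \<in> down T (maxs E) \<or> zero E \<in> down T (maxs D)))"

definition supp :: "'a tree \<Rightarrow> 'a tree set \<Rightarrow> 'a set" where
  "supp T \<gamma> = nodes T - (\<Union>G \<in> \<gamma>. expl T G)"

definition hybr_lt :: "'a tree \<Rightarrow> 'a tree set \<Rightarrow> 'a \<Rightarrow> 'a \<Rightarrow> bool" where
  "hybr_lt T \<gamma> x y \<longleftrightarrow>
     (x \<in> supp T \<gamma> \<and> y \<in> supp T \<gamma> \<and> tlt T x y) \<or>
     (\<exists>G \<in> \<gamma>. x \<in> impl G \<and> y \<in> impl G \<and> tlt G x y) \<or>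
     (\<exists>G \<in> \<gamma>. x \<in> supp T \<gamma> \<and> y \<in> impl G \<and> tle T x (zero G)) \<or>
     (\<exists>G \<in> \<gamma>. x \<in> impl G \<and> y \<in> supp T \<gamma> \<inter> down T (maxs G) \<and>
        tlt G x (root T y (maxs G))) \<or>
     (\<exists>D \<in> \<gamma>. \<exists>E \<in> \<gamma>. D \<noteq> E \<and> x \<in> impl D \<and> y \<in> impl E \<and>
        zero E \<in> down T (maxs D) \<and> tlt D x (root T (zero E) (maxs D)))"

definition hybr :: "'a tree \<Rightarrow> 'a tree set \<Rightarrow> 'a tree" where
  "hybr T \<gamma> = (supp T \<gamma> \<union> (\<Union>G \<in> \<gamma>. impl G), hybr_lt T \<gamma>)"

type_synonym ('a, 'b) ftree = "'a tree \<times> ('a \<Rightarrow> 'b set)"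

definition skel :: "('a, 'b) ftree \<Rightarrow> 'a tree" where
  "skel F = fst F"

definition leaf :: "('a, 'b) ftree \<Rightarrow> 'a \<Rightarrow> 'b set" where
  "leaf F = snd F"

definition is_ftree :: "('a, 'b) ftree \<Rightarrow> bool" where
  "is_ftree F \<longleftrightarrow> is_tree (skel F)"

definition nonincreasing :: "('a, 'b) ftree \<Rightarrow> bool" where
  "nonincreasing F \<longleftrightarrow> is_ftree F \<and>
     (\<forall>x \<in> nodes (skel F). \<forall>y \<in> nodes (skel F). tle (skel F) x y \<longrightarrow> leaf F y \<subseteq> leaf F x)"

definition nonempty_leaves :: "('a, 'b) ftree \<Rightarrow> bool" where
  "nonempty_leaves F \<longleftrightarrow> (\<forall>x \<in> nodes (skel F). leaf F x \<noteq> {})"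

definition flesh :: "('a, 'b) ftree \<Rightarrow> 'b set" where
  "flesh F = (\<Union>x \<in> nodes (skel F). leaf F x)"

definition shoot :: "('a, 'b) ftree \<Rightarrow> 'a \<Rightarrow> 'b set set" where
  "shoot F z = {(\<Union>s \<in> C. leaf F s) | C. C \<subseteq> sons (skel F) z \<and> finite (sons (skel F) z - C)}"

definition scope :: "('a, 'b) ftree \<Rightarrow> 'b \<Rightarrow> 'a set" where
  "scope F p = {y \<in> nodes (skel F). p \<in> leaf F y}"

definition gg :: "'b set set \<Rightarrow> 'b set set \<Rightarrow> bool" (infix "\<ggreater>" 50) where
  "\<gamma> \<ggreater> \<delta> \<longleftrightarrow> (\<forall>D \<in> \<delta>. D \<noteq> {} \<longrightarrow> (\<exists>G \<in> \<gamma>. G \<noteq> {} \<and> G \<subseteq> D))"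

definition is_fgraft :: "('a, 'b) ftree \<Rightarrow> ('a, 'b) ftree \<Rightarrow> bool" where
  "is_fgraft F G \<longleftrightarrow> nonincreasing G \<and> is_graft (skel F) (skel G) \<and>
     leaf G (zero (skel G)) \<subseteq> leaf F (zero (skel G)) \<and>
     (\<forall>m \<in> maxs (skel G). leaf G m = leaf F m)"

definition cut :: "('a, 'b) ftree \<Rightarrow> ('a, 'b) ftree \<Rightarrow> 'b set" where
  "cut F G = leaf F (zero (skel G)) - leaf G (zero (skel G))"

definition consistent_fgrafts :: "('a, 'b) ftree \<Rightarrow> ('a, 'b) ftree set \<Rightarrow> bool" where
  "consistent_fgrafts F \<phi> \<longleftrightarrow> (\<forall>G \<in> \<phi>. is_fgraft F G) \<and> inj_on skel \<phi> \<and>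
     consistent_grafts (skel F) (skel ` \<phi>)"

definition loss :: "('a, 'b) ftree \<Rightarrow> ('a, 'b) ftree set \<Rightarrow> 'b set" where
  "loss F \<phi> = (\<Union>G \<in> \<phi>. cut F G)"

definition fsupp :: "('a, 'b) ftree \<Rightarrow> ('a, 'b) ftree set \<Rightarrow> 'a set" where
  "fsupp F \<phi> = supp (skel F) (skel ` \<phi>)"

definition fhybr :: "('a, 'b) ftree \<Rightarrow> ('a, 'b) ftree set \<Rightarrow> ('a, 'b) ftree" where
  "fhybr F \<phi> = (hybr (skel F) (skel ` \<phi>),
     (\<lambda>x. if x \<in> fsupp F \<phi> then leaf F x - loss F \<phi>
          else if (\<exists>G \<in> \<phi>. x \<in> impl (skel G))
            then leaf (SOME G. G \<in> \<phi> \<and> x \<in> impl (skel G)) x - loss F \<phi>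
          else {}))"

definition preserves_shoots :: "('a, 'b) ftree \<Rightarrow> ('a, 'b) ftree \<Rightarrow> bool" where
  "preserves_shoots F G \<longleftrightarrow>
     (\<forall>p \<in> flesh G. \<forall>y \<in> scope F p \<inter> ({zero (skel G)} \<union> expl (skel F) (skel G)).
        \<exists>x \<in> scope G p \<inter> ({zero (skel G)} \<union> impl (skel G)). shoot G x \<ggreater> shoot F y)"

definition shoots_into :: "('a, 'b) ftree \<Rightarrow> ('a, 'b) ftree \<Rightarrow> bool" where
  "shoots_into H F \<longleftrightarrow>
     (\<forall>p \<in> flesh H. \<forall>y \<in> scope F p. \<exists>x \<in> scope H p. shoot H x \<ggreater> shoot F y)"

end

theory Submission
  imports Defs
begin



lemma tr_all: "is_tree T \<Longrightarrow> (\<forall>x y. tlt T x y \<longrightarrow> x \<in> nodes T \<and> y \<in> nodes T) \<and>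
     (\<forall>x. \<not> tlt T x x) \<and>
     (\<forall>x y z. tlt T x y \<longrightarrow> tlt T y z \<longrightarrow> tlt T x z) \<and>
     (\<forall>x \<in> nodes T. \<forall>y z. tlt T y x \<longrightarrow> tlt T z x \<longrightarrow> tlt T y z \<or> y = z \<or> tlt T z y)"
  unfolding is_tree_def by simp

lemma tr_trans: "is_tree T \<Longrightarrow> tlt T x y \<Longrightarrow> tlt T y z \<Longrightarrow> tlt T x z"
  using tr_all[THEN conjunct2, THEN conjunct2, THEN conjunct1] by blast
lemma tr_irr: "is_tree T \<Longrightarrow> \<not> tlt T x x"
  using tr_all[THEN conjunct2, THEN conjunct1] by blast
lemma tr_nodes: "is_tree T \<Longrightarrow> tlt T x y \<Longrightarrow> x \<in> nodes T \<and> y \<in> nodes T"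
  using tr_all[THEN conjunct1] by blast
lemma tr_lin: "is_tree T \<Longrightarrow> tlt T a w \<Longrightarrow> tlt T b w \<Longrightarrow> tlt T a b \<or> a = b \<or> tlt T b a"
proof -
  assume T: "is_tree T" and a: "tlt T a w" and b: "tlt T b w"
  have w: "w \<in> nodes T" using tr_nodes[OF T a] by blast
  have "\<forall>x \<in> nodes T. \<forall>y z. tlt T y x \<longrightarrow> tlt T z x \<longrightarrow> tlt T y z \<or> y = z \<or> tlt T z y"
    using tr_all[OF T, THEN conjunct2, THEN conjunct2, THEN conjunct2] .
  thus ?thesis using w a b by blast
qed
lemma tle_lt: "is_tree T \<Longrightarrow> tle T x y \<Longrightarrow> tlt T y z \<Longrightarrow> tlt T x z"
  unfolding tle_def by (metis tr_trans)
lemma lt_tle: "is_tree T \<Longrightarrow> tlt T x y \<Longrightarrow> tle T y z \<Longrightarrow> tlt T x z"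
  unfolding tle_def by (metis tr_trans)
lemma tle_tle: "is_tree T \<Longrightarrow> tle T x y \<Longrightarrow> tle T y z \<Longrightarrow> tle T x z"
  unfolding tle_def by (metis tr_trans)

lemma least_zero:
  assumes "is_tree S" "has_least S"
  shows "zero S \<in> nodes S \<and> (\<forall>x \<in> nodes S. tle S (zero S) x)"
proof -
  obtain r where r: "r \<in> nodes S" "\<forall>x \<in> nodes S. tle S r x" using assms(2) unfolding has_least_def by blast
  have "zero S = r" unfolding zero_def
  proof (rule the_equality)
    show "r \<in> nodes S \<and> (\<forall>x \<in> nodes S. tle S r x)" using r by blast
  next
    fix r' assume r': "r' \<in> nodes S \<and> (\<forall>x \<in> nodes S. tle S r' x)"
    hence a: "tle S r' r" "tle S r r'" using r by auto
    show "r' = r"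
    proof (rule ccontr)
      assume "r' \<noteq> r"
      hence "tlt S r' r" "tlt S r r'" using a unfolding tle_def by auto
      hence "tlt S r r" using tr_trans[OF assms(1)] by blast
      thus False using tr_irr[OF assms(1)] by blast
    qed
  qed
  thus ?thesis using r by simp
qed

lemma root_props:
  assumes T: "is_tree T" and A: "antichain T A" and y: "y \<in> down T A"
  shows "root T y A \<in> A \<and> tle T (root T y A) y"
proof -
  obtain a where a: "a \<in> A" "tle T a y" using y unfolding down_def by blast
  have "root T y A = a" unfolding root_def
  proof (rule the_equality)
    show "a \<in> A \<and> tle T a y" using a by blast
  next
    fix r assume r: "r \<in> A \<and> tle T r y"
    show "r = a"
    proof (rule ccontr)
      assume ne: "r \<noteq> a"
      hence par: "tpar T r a" using A a r unfolding antichain_def by blast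
      have "tle T r a \<or> tle T a r"
      proof (cases "r = y")
        case True thus ?thesis using a by simp
      next
        case False
        show ?thesis
        proof (cases "a = y")
          case True thus ?thesis using r by simp
        next
          case False
          hence "tlt T r y" "tlt T a y" using `r \<noteq> y` r a unfolding tle_def by auto
          hence "tlt T r a \<or> r = a \<or> tlt T a r" by (rule tr_lin[OF T])
          thus ?thesis unfolding tle_def by blast
        qed
      qed
      thus False using par unfolding tpar_def by blast
    qed
  qed
  thus ?thesis using a by simp
qed

lemma root_self:
  assumes T: "is_tree T" and A: "antichain T A" and a: "a \<in> A"
  shows "root T a A = a"
proof -
  have "a \<in> nodes T" using A a unfolding antichain_def by blast
  hence "a \<in> down T A" using a unfolding down_def tle_def by blast
  from root_props[OF T A this] have r: "root T a A \<in> A" "tle T (root T a A) a" by auto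
  show ?thesis
  proof (rule ccontr)
    assume "root T a A \<noteq> a"
    hence "tpar T (root T a A) a" using A a r(1) unfolding antichain_def by blast
    thus False using r(2) unfolding tpar_def by blast
  qed
qed

lemma anti_lt: "is_tree T \<Longrightarrow> antichain T A \<Longrightarrow> a \<in> A \<Longrightarrow> b \<in> A \<Longrightarrow> tlt T a b \<Longrightarrow> False"
proof -
  assume T: "is_tree T" and A: "antichain T A" and a: "a \<in> A" and b: "b \<in> A" and l: "tlt T a b"
  have "a \<noteq> b" using l tr_irr[OF T] by blast
  hence "tpar T a b" using A a b unfolding antichain_def by blast
  thus False using l unfolding tpar_def tle_def by blast
qed

lemma gg_trans: "a \<ggreater> b \<Longrightarrow> b \<ggreater> c \<Longrightarrow> a \<ggreater> c"
  unfolding gg_def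
proof (intro ballI impI)
  fix D assume a: "\<forall>D\<in>b. D \<noteq> {} \<longrightarrow> (\<exists>G\<in>a. G \<noteq> {} \<and> G \<subseteq> D)"
    and b: "\<forall>D\<in>c. D \<noteq> {} \<longrightarrow> (\<exists>G\<in>b. G \<noteq> {} \<and> G \<subseteq> D)"
    and D: "D \<in> c" "D \<noteq> {}"
  obtain G where G: "G \<in> b" "G \<noteq> {}" "G \<subseteq> D" using b D by blast
  obtain G' where "G' \<in> a" "G' \<noteq> {}" "G' \<subseteq> G" using a G(1,2) by blast
  thus "\<exists>G\<in>a. G \<noteq> {} \<and> G \<subseteq> D" using G(3) by blast
qed

lemma shoot_transfer:
  assumes "sons (skel H) x = sons (skel K) x"
    and "\<forall>s \<in> sons (skel K) x. leaf H s = leaf K s - L"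
    and "\<forall>s \<in> sons (skel H) x. leaf H s \<noteq> {}"
  shows "shoot H x \<ggreater> shoot K x"
  unfolding gg_def
proof (intro ballI impI)
  fix D assume "D \<in> shoot K x" "D \<noteq> {}"
  then obtain C where C: "D = (\<Union>s \<in> C. leaf K s)" "C \<subseteq> sons (skel K) x" "finite (sons (skel K) x - C)"
    unfolding shoot_def by auto
  obtain s where s: "s \<in> C" using C(1) `D \<noteq> {}` by blast
  let ?G = "\<Union>s \<in> C. leaf H s"
  have c1: "C \<subseteq> sons (skel H) x" "finite (sons (skel H) x - C)" using C(2,3) assms(1) by auto
  have "?G \<in> shoot H x" unfolding shoot_def using c1 by blast
  moreover have "?G \<noteq> {}"
  proof -
    have "s \<in> sons (skel H) x" using s C(2) assms(1) by blast
    hence "leaf H s \<noteq> {}" using assms(3) by blast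
    thus ?thesis using s by blast
  qed
  moreover have "?G \<subseteq> D"
  proof
    fix p assume "p \<in> ?G"
    then obtain t where t: "t \<in> C" "p \<in> leaf H t" by blast
    hence "p \<in> leaf K t" using C(2) assms(2) by blast
    thus "p \<in> D" using t C(1) by blast
  qed
  ultimately show "\<exists>G\<in>shoot H x. G \<noteq> {} \<and> G \<subseteq> D" by blast
qed




locale hyb =
  fixes F :: "('a, 'b) ftree" and \<phi> :: "('a, 'b) ftree set"
  assumes ni: "nonincreasing F" and cf: "consistent_fgrafts F \<phi>"
begin

abbreviation "TT \<equiv> skel F"
abbreviation "\<gamma> \<equiv> skel ` \<phi>"
abbreviation "SP \<equiv> supp TT \<gamma>"
abbreviation "hlt \<equiv> hybr_lt TT \<gamma>"

lemma treeT: "is_tree TT"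
  using ni unfolding nonincreasing_def is_ftree_def by blast

lemma gS: "S \<in> \<gamma> \<Longrightarrow> is_graft TT S"
  using cf unfolding consistent_fgrafts_def consistent_grafts_def by blast

lemma treeS: "S \<in> \<gamma> \<Longrightarrow> is_tree S"
  using gS unfolding is_graft_def by blast

lemma zeroS: "S \<in> \<gamma> \<Longrightarrow> zero S \<in> nodes S"
  using gS least_zero treeS unfolding is_graft_def by blast

lemma zero_le: "S \<in> \<gamma> \<Longrightarrow> x \<in> nodes S \<Longrightarrow> tle S (zero S) x"
  using gS least_zero treeS unfolding is_graft_def by blast

lemma zeroT: "S \<in> \<gamma> \<Longrightarrow> zero S \<in> nodes TT"
  using gS unfolding is_graft_def by blast

lemma maxsT: "S \<in> \<gamma> \<Longrightarrow> m \<in> maxs S \<Longrightarrow> m \<in> nodes TT \<and> tlt TT (zero S) m"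
  using gS unfolding is_graft_def by blast

lemma maxsS: "m \<in> maxs S \<Longrightarrow> m \<in> nodes S"
  unfolding maxs_def by blast

lemma maxs_nlt: "m \<in> maxs S \<Longrightarrow> \<not> tlt S m w"
  unfolding maxs_def by blast

lemma antiS: "S \<in> \<gamma> \<Longrightarrow> antichain TT (maxs S)"
  using gS unfolding is_graft_def by blast

lemma implT: "S \<in> \<gamma> \<Longrightarrow> x \<in> impl S \<Longrightarrow> x \<notin> nodes TT"
  using gS unfolding is_graft_def by blast

lemma impl_char: "x \<in> impl S \<longleftrightarrow> x \<in> nodes S \<and> x \<noteq> zero S \<and> x \<notin> maxs S"
  unfolding impl_def by blast

lemma impl_zero_lt: "S \<in> \<gamma> \<Longrightarrow> x \<in> impl S \<Longrightarrow> tlt S (zero S) x"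
proof -
  assume S: "S \<in> \<gamma>" and x: "x \<in> impl S"
  hence "x \<in> nodes S" "x \<noteq> zero S" unfolding impl_def by auto
  thus ?thesis using zero_le[OF S] unfolding tle_def by blast
qed

lemma cons: "D \<in> \<gamma> \<Longrightarrow> E \<in> \<gamma> \<Longrightarrow> D \<noteq> E \<Longrightarrow> impl D \<inter> impl E = {} \<and>
   (tpar TT (zero D) (zero E) \<or> zero D \<in> down TT (maxs E) \<or> zero E \<in> down TT (maxs D))"
  using cf unfolding consistent_fgrafts_def consistent_grafts_def by blast

lemma impl_uniq: "D \<in> \<gamma> \<Longrightarrow> E \<in> \<gamma> \<Longrightarrow> x \<in> impl D \<Longrightarrow> x \<in> impl E \<Longrightarrow> D = E"
  using cons by blast

lemma down_E: "v \<in> down TT A \<Longrightarrow> \<exists>a \<in> A. tle TT a v"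
  unfolding down_def by blast

lemma down_I: "v \<in> nodes TT \<Longrightarrow> a \<in> A \<Longrightarrow> tle TT a v \<Longrightarrow> v \<in> down TT A"
  unfolding down_def by blast

lemma zero_max_lt: "S \<in> \<gamma> \<Longrightarrow> v \<in> down TT (maxs S) \<Longrightarrow> tlt TT (zero S) v"
proof -
  assume S: "S \<in> \<gamma>" and v: "v \<in> down TT (maxs S)"
  then obtain m where "m \<in> maxs S" "tle TT m v" using down_E by blast
  thus ?thesis using maxsT[OF S] lt_tle[OF treeT] by blast
qed

lemma supp_nodes: "v \<in> SP \<Longrightarrow> v \<in> nodes TT"
  unfolding supp_def by blast

lemma impl_nsupp: "S \<in> \<gamma> \<Longrightarrow> x \<in> impl S \<Longrightarrow> x \<notin> SP"
  using implT supp_nodes by blast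

lemma supp_above: "v \<in> SP \<Longrightarrow> S \<in> \<gamma> \<Longrightarrow> tlt TT (zero S) v \<Longrightarrow> v \<in> down TT (maxs S)"
  unfolding supp_def expl_def by blast

lemma zero_supp: assumes S: "S \<in> \<gamma>" shows "zero S \<in> SP"
proof -
  have "zero S \<notin> expl TT E" if E: "E \<in> \<gamma>" for E
  proof
    assume "zero S \<in> expl TT E"
    hence a: "tlt TT (zero E) (zero S)" "zero S \<notin> down TT (maxs E)" unfolding expl_def by auto
    have "E \<noteq> S" using a(1) tr_irr[OF treeT] by blast
    hence "tpar TT (zero E) (zero S) \<or> zero E \<in> down TT (maxs S) \<or> zero S \<in> down TT (maxs E)"
      using cons[OF E S] by blast
    moreover have "\<not> tpar TT (zero E) (zero S)" using a(1) unfolding tpar_def tle_def by blast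
    moreover have "zero E \<notin> down TT (maxs S)"
    proof
      assume "zero E \<in> down TT (maxs S)"
      hence "tlt TT (zero S) (zero E)" using zero_max_lt[OF S] by blast
      thus False using a(1) tr_trans[OF treeT] tr_irr[OF treeT] by blast
    qed
    ultimately show False using a(2) by blast
  qed
  thus ?thesis using zeroT[OF S] unfolding supp_def by blast
qed

lemma zero_inj: assumes D: "D \<in> \<gamma>" and E: "E \<in> \<gamma>" and z: "zero D = zero E" shows "D = E"
proof (rule ccontr)
  assume ne: "D \<noteq> E"
  have "\<not> tpar TT (zero D) (zero E)" using z unfolding tpar_def tle_def by blast
  moreover have "zero D \<notin> down TT (maxs E)"
    using zero_max_lt[OF E] z tr_irr[OF treeT] by metis
  moreover have "zero E \<notin> down TT (maxs D)"
    using zero_max_lt[OF D] z tr_irr[OF treeT] by metis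
  ultimately show False using cons[OF D E ne] by blast
qed

lemma maxs_supp: assumes S: "S \<in> \<gamma>" and m: "m \<in> maxs S" shows "m \<in> SP"
proof -
  have mT: "m \<in> nodes TT" and zm: "tlt TT (zero S) m" using maxsT[OF S m] by auto
  have "m \<notin> expl TT E" if E: "E \<in> \<gamma>" for E
  proof
    assume "m \<in> expl TT E"
    hence a: "tlt TT (zero E) m" "m \<notin> down TT (maxs E)" unfolding expl_def by auto
    show False
    proof (cases "E = S")
      case True
      thus False using a(2) down_I[OF mT m] unfolding tle_def by blast
    next
      case False
      hence c: "tpar TT (zero S) (zero E) \<or> zero S \<in> down TT (maxs E) \<or> zero E \<in> down TT (maxs S)"
        using cons[OF S E] by blast
      moreover have "\<not> tpar TT (zero S) (zero E)"
        using tr_lin[OF treeT zm a(1)] unfolding tpar_def tle_def by blast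
      moreover have "zero S \<notin> down TT (maxs E)"
      proof
        assume "zero S \<in> down TT (maxs E)"
        then obtain m' where "m' \<in> maxs E" "tle TT m' (zero S)" using down_E by blast
        moreover have "tle TT m' m" using calculation(2) zm lt_tle[OF treeT] tle_lt[OF treeT] unfolding tle_def by blast
        ultimately show False using a(2) down_I[OF mT] by blast
      qed
      moreover have "zero E \<notin> down TT (maxs S)"
      proof
        assume "zero E \<in> down TT (maxs S)"
        then obtain m' where m': "m' \<in> maxs S" "tle TT m' (zero E)" using down_E by blast
        hence "tlt TT m' m" using a(1) tle_lt[OF treeT] by blast
        thus False using anti_lt[OF treeT antiS[OF S] m'(1) m] by blast
      qed
      ultimately show False by blast
    qed
  qed
  thus ?thesis using mT unfolding supp_def by blast
qed

lemma root_m: "S \<in> \<gamma> \<Longrightarrow> v \<in> down TT (maxs S) \<Longrightarrow> root TT v (maxs S) \<in> maxs S \<and> tle TT (root TT v (maxs S)) v"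
  using root_props[OF treeT antiS] by blast

lemma root_s: "S \<in> \<gamma> \<Longrightarrow> m \<in> maxs S \<Longrightarrow> root TT m (maxs S) = m"
  using root_self[OF treeT antiS] by blast

lemma max_down: "S \<in> \<gamma> \<Longrightarrow> m \<in> maxs S \<Longrightarrow> m \<in> down TT (maxs S)"
  using down_I maxsT unfolding tle_def by blast

lemma nimpl: "x \<in> SP \<Longrightarrow> \<forall>G\<in>\<gamma>. x \<notin> impl G"
  using impl_nsupp by blast

lemma uimpl: "S \<in> \<gamma> \<Longrightarrow> y \<in> impl S \<Longrightarrow> \<forall>G\<in>\<gamma>. y \<in> impl G \<longrightarrow> G = S"
  using impl_uniq by blast

lemma hlt_ss: assumes "x \<in> SP" "y \<in> SP" shows "hlt x y \<longleftrightarrow> tlt TT x y"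
proof -
  have a: "\<forall>G\<in>\<gamma>. x \<notin> impl G" "\<forall>G\<in>\<gamma>. y \<notin> impl G" using nimpl assms by auto
  show ?thesis unfolding hybr_lt_def using a assms by blast
qed

lemma hlt_si: assumes S: "S \<in> \<gamma>" and x: "x \<in> SP" and y: "y \<in> impl S"
  shows "hlt x y \<longleftrightarrow> tle TT x (zero S)"
proof -
  have a: "\<forall>G\<in>\<gamma>. x \<notin> impl G" using nimpl x by auto
  have b: "y \<notin> SP" using impl_nsupp S y by blast
  have c: "\<forall>G\<in>\<gamma>. y \<in> impl G \<longrightarrow> G = S" using uimpl S y by blast
  show ?thesis
  proof
    assume "hlt x y"
    hence "\<exists>G\<in>\<gamma>. y \<in> impl G \<and> tle TT x (zero G)" unfolding hybr_lt_def using a b by blast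
    then obtain G where "G \<in> \<gamma>" "y \<in> impl G" "tle TT x (zero G)" by blast
    thus "tle TT x (zero S)" using c by metis
  next
    assume "tle TT x (zero S)" thus "hlt x y" unfolding hybr_lt_def using S x y by blast
  qed
qed

lemma hlt_is: assumes S: "S \<in> \<gamma>" and x: "x \<in> impl S" and y: "y \<in> SP"
  shows "hlt x y \<longleftrightarrow> y \<in> down TT (maxs S) \<and> tlt S x (root TT y (maxs S))"
proof -
  have a: "\<forall>G\<in>\<gamma>. y \<notin> impl G" using nimpl y by auto
  have b: "x \<notin> SP" using impl_nsupp S x by blast
  have c: "\<forall>G\<in>\<gamma>. x \<in> impl G \<longrightarrow> G = S" using uimpl S x by blast
  show ?thesis
  proof
    assume "hlt x y"
    hence "\<exists>G\<in>\<gamma>. x \<in> impl G \<and> y \<in> down TT (maxs G) \<and> tlt G x (root TT y (maxs G))"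
      unfolding hybr_lt_def using a b by blast
    then obtain G where "G \<in> \<gamma>" "x \<in> impl G" "y \<in> down TT (maxs G) \<and> tlt G x (root TT y (maxs G))" by blast
    thus "y \<in> down TT (maxs S) \<and> tlt S x (root TT y (maxs S))" using c by metis
  next
    assume "y \<in> down TT (maxs S) \<and> tlt S x (root TT y (maxs S))"
    thus "hlt x y" unfolding hybr_lt_def using S x y by blast
  qed
qed

lemma hlt_ii: assumes S: "S \<in> \<gamma>" and x: "x \<in> impl S" and y: "y \<in> impl S"
  shows "hlt x y \<longleftrightarrow> tlt S x y"
proof -
  have a: "y \<notin> SP" using impl_nsupp S y by blast
  have b: "x \<notin> SP" using impl_nsupp S x by blast
  have c: "\<forall>G\<in>\<gamma>. x \<in> impl G \<longrightarrow> G = S" using uimpl S x by blast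
  have d: "\<forall>G\<in>\<gamma>. y \<in> impl G \<longrightarrow> G = S" using uimpl S y by blast
  show ?thesis
  proof
    assume "hlt x y"
    hence "(\<exists>G\<in>\<gamma>. x \<in> impl G \<and> y \<in> impl G \<and> tlt G x y) \<or>
      (\<exists>D\<in>\<gamma>. \<exists>E\<in>\<gamma>. D \<noteq> E \<and> x \<in> impl D \<and> y \<in> impl E)"
      unfolding hybr_lt_def using a b by blast
    moreover have "\<not> (\<exists>D\<in>\<gamma>. \<exists>E\<in>\<gamma>. D \<noteq> E \<and> x \<in> impl D \<and> y \<in> impl E)" using c d by metis
    ultimately obtain G where "G \<in> \<gamma>" "x \<in> impl G" "tlt G x y" by blast
    thus "tlt S x y" using c by metis
  next
    assume "tlt S x y" thus "hlt x y" unfolding hybr_lt_def using S x y by blast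
  qed
qed

lemma hlt_id: assumes D: "D \<in> \<gamma>" and E: "E \<in> \<gamma>" and ne: "D \<noteq> E" and x: "x \<in> impl D" and y: "y \<in> impl E"
  shows "hlt x y \<longleftrightarrow> zero E \<in> down TT (maxs D) \<and> tlt D x (root TT (zero E) (maxs D))"
proof -
  have a: "y \<notin> SP" using impl_nsupp E y by blast
  have b: "x \<notin> SP" using impl_nsupp D x by blast
  have c: "\<forall>G\<in>\<gamma>. x \<in> impl G \<longrightarrow> G = D" using uimpl D x by blast
  have d: "\<forall>G\<in>\<gamma>. y \<in> impl G \<longrightarrow> G = E" using uimpl E y by blast
  show ?thesis
  proof
    assume "hlt x y"
    hence "(\<exists>G\<in>\<gamma>. x \<in> impl G \<and> y \<in> impl G) \<or>
      (\<exists>D'\<in>\<gamma>. \<exists>E'\<in>\<gamma>. x \<in> impl D' \<and> y \<in> impl E' \<and>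
        zero E' \<in> down TT (maxs D') \<and> tlt D' x (root TT (zero E') (maxs D')))"
      unfolding hybr_lt_def using a b by blast
    moreover have "\<not> (\<exists>G\<in>\<gamma>. x \<in> impl G \<and> y \<in> impl G)" using c d ne by metis
    ultimately obtain D' E' where "D' \<in> \<gamma>" "E' \<in> \<gamma>" "x \<in> impl D'" "y \<in> impl E'"
      "zero E' \<in> down TT (maxs D') \<and> tlt D' x (root TT (zero E') (maxs D'))" by blast
    thus "zero E \<in> down TT (maxs D) \<and> tlt D x (root TT (zero E) (maxs D))" using c d by metis
  next
    assume "zero E \<in> down TT (maxs D) \<and> tlt D x (root TT (zero E) (maxs D))"
    thus "hlt x y" unfolding hybr_lt_def using D E x y ne by blast
  qed
qed

lemma hlt_nodes: "hlt x y \<Longrightarrow> (x \<in> SP \<or> (\<exists>S \<in> \<gamma>. x \<in> impl S)) \<and> (y \<in> SP \<or> (\<exists>S \<in> \<gamma>. y \<in> impl S))"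
  unfolding hybr_lt_def by blast

lemma nodesH: "nodes (hybr TT \<gamma>) = SP \<union> (\<Union>G \<in> \<gamma>. impl G)"
  unfolding hybr_def nodes_def by simp

lemma tltH: "tlt (hybr TT \<gamma>) = hlt"
  unfolding hybr_def tlt_def by simp

lemma sonsH: "s \<in> sons (hybr TT \<gamma>) x \<longleftrightarrow> s \<in> SP \<union> (\<Union>G \<in> \<gamma>. impl G) \<and> hlt x s \<and> \<not> (\<exists>w. hlt x w \<and> hlt w s)"
  unfolding sons_def nodesH tltH by blast

lemma sonsS: "S \<in> \<gamma> \<Longrightarrow> s \<in> sons S x \<longleftrightarrow> tlt S x s \<and> \<not> (\<exists>w. tlt S x w \<and> tlt S w s)"
  unfolding sons_def using tr_nodes[OF treeS] by blast

end



context hyb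
begin

lemma sons1: assumes y: "y \<in> SP" and nz: "\<forall>S\<in>\<gamma>. y \<noteq> zero S"
  shows "sons (hybr TT \<gamma>) y = sons TT y"
proof (intro set_eqI iffI)
  fix s assume "s \<in> sons (hybr TT \<gamma>) y"
  hence lt: "hlt y s" and nb: "\<not> (\<exists>w. hlt y w \<and> hlt w s)" using sonsH by auto
  have sS: "s \<in> SP"
  proof (rule ccontr)
    assume "s \<notin> SP"
    then obtain S where S: "S \<in> \<gamma>" "s \<in> impl S" using hlt_nodes[OF lt] by blast
    have "tle TT y (zero S)" using hlt_si[OF S(1) y S(2)] lt by simp
    hence "tlt TT y (zero S)" using nz S(1) unfolding tle_def by auto
    hence "hlt y (zero S)" using hlt_ss[OF y zero_supp[OF S(1)]] by simp
    moreover have "hlt (zero S) s" using hlt_si[OF S(1) zero_supp[OF S(1)] S(2)] unfolding tle_def by simp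
    ultimately show False using nb by blast
  qed
  have ys: "tlt TT y s" using hlt_ss[OF y sS] lt by simp
  have nb2: "\<not> (\<exists>w. tlt TT y w \<and> tlt TT w s)"
  proof
    assume "\<exists>w. tlt TT y w \<and> tlt TT w s"
    then obtain w where w: "tlt TT y w" "tlt TT w s" by blast
    show False
    proof (cases "w \<in> SP")
      case True
      thus False using nb hlt_ss[OF y True] hlt_ss[OF True sS] w by blast
    next
      case False
      have wT: "w \<in> nodes TT" using tr_nodes[OF treeT w(1)] by blast
      then obtain S where S: "S \<in> \<gamma>" "w \<in> expl TT S" using False unfolding supp_def by blast
      hence zw: "tlt TT (zero S) w" and wnd: "w \<notin> down TT (maxs S)" unfolding expl_def by auto
      have zs: "tlt TT (zero S) s" using tr_trans[OF treeT zw w(2)] .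
      have "tlt TT (zero S) y \<or> zero S = y \<or> tlt TT y (zero S)" using tr_lin[OF treeT zs ys] .
      moreover have "zero S \<noteq> y" using nz S(1) by auto
      moreover have "\<not> tlt TT (zero S) y"
      proof
        assume "tlt TT (zero S) y"
        hence "y \<in> down TT (maxs S)" using supp_above[OF y S(1)] by blast
        then obtain m where "m \<in> maxs S" "tle TT m y" using down_E by blast
        moreover have "tle TT m w" using calculation(2) w(1) tle_lt[OF treeT] unfolding tle_def by blast
        ultimately show False using wnd down_I[OF wT] by blast
      qed
      moreover have "\<not> tlt TT y (zero S)"
      proof
        assume "tlt TT y (zero S)"
        hence "hlt y (zero S)" using hlt_ss[OF y zero_supp[OF S(1)]] by simp
        moreover have "hlt (zero S) s" using hlt_ss[OF zero_supp[OF S(1)] sS] zs by simp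
        ultimately show False using nb by blast
      qed
      ultimately show False by blast
    qed
  qed
  show "s \<in> sons TT y" unfolding sons_def using ys nb2 tr_nodes[OF treeT ys] by blast
next
  fix s assume "s \<in> sons TT y"
  hence ys: "tlt TT y s" and nb: "\<not> (\<exists>w. tlt TT y w \<and> tlt TT w s)" and sT: "s \<in> nodes TT"
    unfolding sons_def by auto
  have sS: "s \<in> SP"
  proof (rule ccontr)
    assume "s \<notin> SP"
    then obtain S where S: "S \<in> \<gamma>" "s \<in> expl TT S" using sT unfolding supp_def by blast
    hence zs: "tlt TT (zero S) s" and snd: "s \<notin> down TT (maxs S)" unfolding expl_def by auto
    have "tlt TT (zero S) y \<or> zero S = y \<or> tlt TT y (zero S)" using tr_lin[OF treeT zs ys] .
    moreover have "zero S \<noteq> y" using nz S(1) by auto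
    moreover have "\<not> tlt TT y (zero S)" using nb zs by blast
    moreover have "\<not> tlt TT (zero S) y"
    proof
      assume "tlt TT (zero S) y"
      hence "y \<in> down TT (maxs S)" using supp_above[OF y S(1)] by blast
      then obtain m where "m \<in> maxs S" "tle TT m y" using down_E by blast
      moreover have "tle TT m s" using calculation(2) ys tle_lt[OF treeT] unfolding tle_def by blast
      ultimately show False using snd down_I[OF sT] by blast
    qed
    ultimately show False by blast
  qed
  have lt: "hlt y s" using hlt_ss[OF y sS] ys by simp
  have nb2: "\<not> (\<exists>w. hlt y w \<and> hlt w s)"
  proof
    assume "\<exists>w. hlt y w \<and> hlt w s"
    then obtain w where w: "hlt y w" "hlt w s" by blast
    show False
    proof (cases "w \<in> SP")
      case True
      thus False using nb hlt_ss[OF y True] hlt_ss[OF True sS] w by blast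
    next
      case False
      then obtain S where S: "S \<in> \<gamma>" "w \<in> impl S" using hlt_nodes[OF w(1)] by blast
      have a: "tle TT y (zero S)" using hlt_si[OF S(1) y S(2)] w(1) by simp
      have "s \<in> down TT (maxs S)" using hlt_is[OF S sS] w(2) by simp
      hence b: "tlt TT (zero S) s" using zero_max_lt[OF S(1)] by blast
      have "tlt TT y (zero S)" using a nz S(1) unfolding tle_def by auto
      thus False using nb b by blast
    qed
  qed
  show "s \<in> sons (hybr TT \<gamma>) y" using sonsH sS lt nb2 by blast
qed

end



context hyb
begin

lemma impl_I: "x \<in> nodes S \<Longrightarrow> x \<noteq> zero S \<Longrightarrow> x \<notin> maxs S \<Longrightarrow> x \<in> impl S"
  unfolding impl_def by blast

lemma nzero_of_lt: "S \<in> \<gamma> \<Longrightarrow> x \<in> impl S \<Longrightarrow> tlt S x w \<Longrightarrow> w \<noteq> zero S"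
proof
  assume S: "S \<in> \<gamma>" and x: "x \<in> impl S" and l: "tlt S x w" and e: "w = zero S"
  have "tlt S (zero S) x" using impl_zero_lt[OF S x] .
  hence "tlt S x x" using l e tr_trans[OF treeS[OF S]] by blast
  thus False using tr_irr[OF treeS[OF S]] by blast
qed

lemma mid_impl: assumes S: "S \<in> \<gamma>" and l1: "tlt S a w" and l2: "tlt S w b" and na: "a \<in> impl S \<or> a = zero S"
  shows "w \<in> impl S"
proof -
  have wS: "w \<in> nodes S" using tr_nodes[OF treeS[OF S] l2] by blast
  have n1: "w \<notin> maxs S" using l2 maxs_nlt[of w S b] by blast
  have n2: "w \<noteq> zero S"
  proof
    assume e: "w = zero S"
    show False
    proof (cases "a = zero S")
      case True thus False using l1 e tr_irr[OF treeS[OF S]] by blast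
    next
      case False
      hence ai: "a \<in> impl S" using na by blast
      show False using nzero_of_lt[OF S ai l1] e by blast
    qed
  qed
  show ?thesis by (rule impl_I[OF wS n2 n1])
qed

lemma sons2: assumes S: "S \<in> \<gamma>" and x: "x \<in> impl S"
  shows "sons (hybr TT \<gamma>) x = sons S x"
proof (intro set_eqI iffI)
  fix s assume "s \<in> sons (hybr TT \<gamma>) x"
  hence lt: "hlt x s" and nb: "\<not> (\<exists>w. hlt x w \<and> hlt w s)" using sonsH by auto
  show "s \<in> sons S x"
  proof (cases "s \<in> SP")
    case True
    have a: "s \<in> down TT (maxs S)" "tlt S x (root TT s (maxs S))" using hlt_is[OF S x True] lt by auto
    let ?m = "root TT s (maxs S)"
    have m: "?m \<in> maxs S" "tle TT ?m s" using root_m[OF S a(1)] by auto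
    have ms: "?m = s"
    proof (rule ccontr)
      assume "?m \<noteq> s"
      hence ml: "tlt TT ?m s" using m(2) unfolding tle_def by auto
      have mS: "?m \<in> SP" using maxs_supp[OF S m(1)] .
      have "hlt x ?m" using hlt_is[OF S x mS] root_s[OF S m(1)] max_down[OF S m(1)] a(2) by simp
      moreover have "hlt ?m s" using hlt_ss[OF mS True] ml by simp
      ultimately show False using nb by blast
    qed
    have xs: "tlt S x s" using a(2) ms by simp
    have sm: "s \<in> maxs S" using m(1) ms by simp
    have "\<not> (\<exists>w. tlt S x w \<and> tlt S w s)"
    proof
      assume "\<exists>w. tlt S x w \<and> tlt S w s"
      then obtain w where w: "tlt S x w" "tlt S w s" by blast
      have wi: "w \<in> impl S" using mid_impl[OF S w] x by blast
      have "hlt x w" using hlt_ii[OF S x wi] w(1) by simp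
      moreover have "hlt w s" using hlt_is[OF S wi True] max_down[OF S sm] root_s[OF S sm] w(2) by simp
      ultimately show False using nb by blast
    qed
    thus ?thesis using sonsS[OF S] xs by blast
  next
    case False
    then obtain E where E: "E \<in> \<gamma>" "s \<in> impl E" using hlt_nodes[OF lt] by blast
    show ?thesis
    proof (cases "E = S")
      case True
      hence si: "s \<in> impl S" using E by simp
      have xs: "tlt S x s" using hlt_ii[OF S x si] lt by simp
      have "\<not> (\<exists>w. tlt S x w \<and> tlt S w s)"
      proof
        assume "\<exists>w. tlt S x w \<and> tlt S w s"
        then obtain w where w: "tlt S x w" "tlt S w s" by blast
        have wi: "w \<in> impl S" using mid_impl[OF S w] x by blast
        have "hlt x w" using hlt_ii[OF S x wi] w(1) by simp
        moreover have "hlt w s" using hlt_ii[OF S wi si] w(2) by simp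
        ultimately show False using nb by blast
      qed
      thus ?thesis using sonsS[OF S] xs by blast
    next
      case ne: False
      have a: "zero E \<in> down TT (maxs S)" "tlt S x (root TT (zero E) (maxs S))"
        using hlt_id[OF S E(1) _ x E(2)] ne lt by auto
      let ?m = "root TT (zero E) (maxs S)"
      have m: "?m \<in> maxs S" "tle TT ?m (zero E)" using root_m[OF S a(1)] by auto
      have mS: "?m \<in> SP" using maxs_supp[OF S m(1)] .
      have "hlt x ?m" using hlt_is[OF S x mS] root_s[OF S m(1)] max_down[OF S m(1)] a(2) by simp
      moreover have "hlt ?m s" using hlt_si[OF E(1) mS E(2)] m(2) by simp
      ultimately show ?thesis using nb by blast
    qed
  qed
next
  fix s assume "s \<in> sons S x"
  hence xs: "tlt S x s" and nbS: "\<not> (\<exists>w. tlt S x w \<and> tlt S w s)" using sonsS[OF S] by auto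
  have sS: "s \<in> nodes S" using tr_nodes[OF treeS[OF S] xs] by blast
  have snz: "s \<noteq> zero S" using nzero_of_lt[OF S x xs] .
  show "s \<in> sons (hybr TT \<gamma>) x"
  proof (cases "s \<in> maxs S")
    case False
    hence si: "s \<in> impl S" using impl_I[OF sS snz] by blast
    have lt: "hlt x s" using hlt_ii[OF S x si] xs by simp
    have "\<not> (\<exists>w. hlt x w \<and> hlt w s)"
    proof
      assume "\<exists>w. hlt x w \<and> hlt w s"
      then obtain w where w: "hlt x w" "hlt w s" by blast
      show False
      proof (cases "w \<in> SP")
        case True
        have "w \<in> down TT (maxs S)" using hlt_is[OF S x True] w(1) by simp
        hence "tlt TT (zero S) w" using zero_max_lt[OF S] by blast
        moreover have "tle TT w (zero S)" using hlt_si[OF S True si] w(2) by simp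
        ultimately have "tlt TT (zero S) (zero S)" using lt_tle[OF treeT] by blast
        thus False using tr_irr[OF treeT] by blast
      next
        case False
        then obtain E where E: "E \<in> \<gamma>" "w \<in> impl E" using hlt_nodes[OF w(1)] by blast
        show False
        proof (cases "E = S")
          case True
          hence wi: "w \<in> impl S" using E by simp
          have "tlt S x w" "tlt S w s" using hlt_ii[OF S x wi] hlt_ii[OF S wi si] w by auto
          thus False using nbS by blast
        next
          case ne: False
          have "zero E \<in> down TT (maxs S)" using hlt_id[OF S E(1) _ x E(2)] ne w(1) by auto
          hence c1: "tlt TT (zero S) (zero E)" using zero_max_lt[OF S] by blast
          have "zero S \<in> down TT (maxs E)" using hlt_id[OF E(1) S _ E(2) si] ne w(2) by auto
          hence c2: "tlt TT (zero E) (zero S)" using zero_max_lt[OF E(1)] by blast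
          show False using tr_trans[OF treeT c1 c2] tr_irr[OF treeT] by blast
        qed
      qed
    qed
    thus ?thesis using sonsH lt si S by blast
  next
    case True
    hence sP: "s \<in> SP" using maxs_supp[OF S] by blast
    have lt: "hlt x s" using hlt_is[OF S x sP] max_down[OF S True] root_s[OF S True] xs by simp
    have "\<not> (\<exists>w. hlt x w \<and> hlt w s)"
    proof
      assume "\<exists>w. hlt x w \<and> hlt w s"
      then obtain w where w: "hlt x w" "hlt w s" by blast
      show False
      proof (cases "w \<in> SP")
        case wP: True
        have "w \<in> down TT (maxs S)" using hlt_is[OF S x wP] w(1) by simp
        then obtain m1 where m1: "m1 \<in> maxs S" "tle TT m1 w" using down_E by blast
        have "tlt TT w s" using hlt_ss[OF wP sP] w(2) by simp
        hence "tlt TT m1 s" using m1(2) tle_lt[OF treeT] by blast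
        thus False using anti_lt[OF treeT antiS[OF S] m1(1) True] by blast
      next
        case False
        then obtain E where E: "E \<in> \<gamma>" "w \<in> impl E" using hlt_nodes[OF w(1)] by blast
        show False
        proof (cases "E = S")
          case eq: True
          hence wi: "w \<in> impl S" using E by simp
          have "tlt S x w" using hlt_ii[OF S x wi] w(1) by simp
          moreover have "tlt S w s" using hlt_is[OF S wi sP] root_s[OF S True] w(2) by simp
          ultimately show False using nbS by blast
        next
          case ne: False
          have "zero E \<in> down TT (maxs S)" using hlt_id[OF S E(1) _ x E(2)] ne w(1) by auto
          then obtain m1 where m1: "m1 \<in> maxs S" "tle TT m1 (zero E)" using down_E by blast
          have "s \<in> down TT (maxs E)" using hlt_is[OF E(1) E(2) sP] w(2) by simp
          hence "tlt TT (zero E) s" using zero_max_lt[OF E(1)] by blast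
          hence "tlt TT m1 s" using m1(2) tle_lt[OF treeT] by blast
          thus False using anti_lt[OF treeT antiS[OF S] m1(1) True] by blast
        qed
      qed
    qed
    thus ?thesis using sonsH lt sP by blast
  qed
qed

lemma sons3: assumes S: "S \<in> \<gamma>"
  shows "sons (hybr TT \<gamma>) (zero S) = sons S (zero S)"
proof (intro set_eqI iffI)
  let ?z = "zero S"
  have zP: "?z \<in> SP" using zero_supp[OF S] .
  fix s assume "s \<in> sons (hybr TT \<gamma>) ?z"
  hence lt: "hlt ?z s" and nb: "\<not> (\<exists>w. hlt ?z w \<and> hlt w s)" using sonsH by auto
  show "s \<in> sons S ?z"
  proof (cases "s \<in> SP")
    case True
    have zs: "tlt TT ?z s" using hlt_ss[OF zP True] lt by simp
    have sd: "s \<in> down TT (maxs S)" using supp_above[OF True S zs] .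
    let ?m = "root TT s (maxs S)"
    have m: "?m \<in> maxs S" "tle TT ?m s" using root_m[OF S sd] by auto
    have ms: "?m = s"
    proof (rule ccontr)
      assume "?m \<noteq> s"
      hence ml: "tlt TT ?m s" using m(2) unfolding tle_def by auto
      have mS: "?m \<in> SP" using maxs_supp[OF S m(1)] .
      have "hlt ?z ?m" using hlt_ss[OF zP mS] maxsT[OF S m(1)] by simp
      moreover have "hlt ?m s" using hlt_ss[OF mS True] ml by simp
      ultimately show False using nb by blast
    qed
    have sm: "s \<in> maxs S" using m(1) ms by simp
    have "tle S ?z s" using zero_le[OF S maxsS[OF sm]] .
    moreover have "s \<noteq> ?z" using zs tr_irr[OF treeT] by blast
    ultimately have xs: "tlt S ?z s" unfolding tle_def by blast
    have "\<not> (\<exists>w. tlt S ?z w \<and> tlt S w s)"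
    proof
      assume "\<exists>w. tlt S ?z w \<and> tlt S w s"
      then obtain w where w: "tlt S ?z w" "tlt S w s" by blast
      have wi: "w \<in> impl S" using mid_impl[OF S w] by blast
      have "hlt ?z w" using hlt_si[OF S zP wi] unfolding tle_def by simp
      moreover have "hlt w s" using hlt_is[OF S wi True] max_down[OF S sm] root_s[OF S sm] w(2) by simp
      ultimately show False using nb by blast
    qed
    thus ?thesis using sonsS[OF S] xs by blast
  next
    case False
    then obtain E where E: "E \<in> \<gamma>" "s \<in> impl E" using hlt_nodes[OF lt] by blast
    have a: "tle TT ?z (zero E)" using hlt_si[OF E(1) zP E(2)] lt by simp
    have eq: "zero E = ?z"
    proof (rule ccontr)
      assume "zero E \<noteq> ?z"
      hence "tlt TT ?z (zero E)" using a unfolding tle_def by auto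
      hence "hlt ?z (zero E)" using hlt_ss[OF zP zero_supp[OF E(1)]] by simp
      moreover have "hlt (zero E) s" using hlt_si[OF E(1) zero_supp[OF E(1)] E(2)] unfolding tle_def by simp
      ultimately show False using nb by blast
    qed
    have "E = S" using zero_inj[OF E(1) S eq] .
    hence si: "s \<in> impl S" using E by simp
    have xs: "tlt S ?z s" using impl_zero_lt[OF S si] .
    have "\<not> (\<exists>w. tlt S ?z w \<and> tlt S w s)"
    proof
      assume "\<exists>w. tlt S ?z w \<and> tlt S w s"
      then obtain w where w: "tlt S ?z w" "tlt S w s" by blast
      have wi: "w \<in> impl S" using mid_impl[OF S w] by blast
      have "hlt ?z w" using hlt_si[OF S zP wi] unfolding tle_def by simp
      moreover have "hlt w s" using hlt_ii[OF S wi si] w(2) by simp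
      ultimately show False using nb by blast
    qed
    thus ?thesis using sonsS[OF S] xs by blast
  qed
next
  let ?z = "zero S"
  have zP: "?z \<in> SP" using zero_supp[OF S] .
  fix s assume "s \<in> sons S ?z"
  hence xs: "tlt S ?z s" and nbS: "\<not> (\<exists>w. tlt S ?z w \<and> tlt S w s)" using sonsS[OF S] by auto
  have sS: "s \<in> nodes S" using tr_nodes[OF treeS[OF S] xs] by blast
  have snz: "s \<noteq> ?z" using xs tr_irr[OF treeS[OF S]] by blast
  show "s \<in> sons (hybr TT \<gamma>) ?z"
  proof (cases "s \<in> maxs S")
    case False
    hence si: "s \<in> impl S" using impl_I[OF sS snz] by blast
    have lt: "hlt ?z s" using hlt_si[OF S zP si] unfolding tle_def by simp
    have "\<not> (\<exists>w. hlt ?z w \<and> hlt w s)"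
    proof
      assume "\<exists>w. hlt ?z w \<and> hlt w s"
      then obtain w where w: "hlt ?z w" "hlt w s" by blast
      show False
      proof (cases "w \<in> SP")
        case True
        have "tlt TT ?z w" using hlt_ss[OF zP True] w(1) by simp
        moreover have "tle TT w ?z" using hlt_si[OF S True si] w(2) by simp
        ultimately have "tlt TT ?z ?z" using lt_tle[OF treeT] by blast
        thus False using tr_irr[OF treeT] by blast
      next
        case False
        then obtain E where E: "E \<in> \<gamma>" "w \<in> impl E" using hlt_nodes[OF w(1)] by blast
        show False
        proof (cases "E = S")
          case True
          hence wi: "w \<in> impl S" using E by simp
          have "tlt S w s" using hlt_ii[OF S wi si] w(2) by simp
          moreover have "tlt S ?z w" using impl_zero_lt[OF S wi] .
          ultimately show False using nbS by blast
        next
          case ne: False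
          have c1: "tle TT ?z (zero E)" using hlt_si[OF E(1) zP E(2)] w(1) by simp
          have "zero S \<in> down TT (maxs E)" using hlt_id[OF E(1) S _ E(2) si] ne w(2) by auto
          hence c2: "tlt TT (zero E) (zero S)" using zero_max_lt[OF E(1)] by blast
          show False using tle_lt[OF treeT c1 c2] tr_irr[OF treeT] by blast
        qed
      qed
    qed
    thus ?thesis using sonsH lt si S by blast
  next
    case True
    hence sP: "s \<in> SP" using maxs_supp[OF S] by blast
    have zs: "tlt TT ?z s" using maxsT[OF S True] by blast
    have lt: "hlt ?z s" using hlt_ss[OF zP sP] zs by simp
    have "\<not> (\<exists>w. hlt ?z w \<and> hlt w s)"
    proof
      assume "\<exists>w. hlt ?z w \<and> hlt w s"
      then obtain w where w: "hlt ?z w" "hlt w s" by blast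
      show False
      proof (cases "w \<in> SP")
        case wP: True
        have zw: "tlt TT ?z w" using hlt_ss[OF zP wP] w(1) by simp
        have ws: "tlt TT w s" using hlt_ss[OF wP sP] w(2) by simp
        have "w \<in> down TT (maxs S)" using supp_above[OF wP S zw] .
        then obtain m1 where m1: "m1 \<in> maxs S" "tle TT m1 w" using down_E by blast
        hence "tlt TT m1 s" using ws tle_lt[OF treeT] by blast
        thus False using anti_lt[OF treeT antiS[OF S] m1(1) True] by blast
      next
        case False
        then obtain E where E: "E \<in> \<gamma>" "w \<in> impl E" using hlt_nodes[OF w(1)] by blast
        show False
        proof (cases "E = S")
          case eq: True
          hence wi: "w \<in> impl S" using E by simp
          have "tlt S w s" using hlt_is[OF S wi sP] root_s[OF S True] w(2) by simp
          moreover have "tlt S ?z w" using impl_zero_lt[OF S wi] .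
          ultimately show False using nbS by blast
        next
          case ne: False
          have c1: "tle TT ?z (zero E)" using hlt_si[OF E(1) zP E(2)] w(1) by simp
          have "?z \<noteq> zero E" using zero_inj[OF S E(1)] ne by blast
          hence c1': "tlt TT ?z (zero E)" using c1 unfolding tle_def by blast
          have zEP: "zero E \<in> SP" using zero_supp[OF E(1)] .
          have "zero E \<in> down TT (maxs S)" using supp_above[OF zEP S c1'] .
          then obtain m1 where m1: "m1 \<in> maxs S" "tle TT m1 (zero E)" using down_E by blast
          have "s \<in> down TT (maxs E)" using hlt_is[OF E(1) E(2) sP] w(2) by simp
          hence "tlt TT (zero E) s" using zero_max_lt[OF E(1)] by blast
          hence "tlt TT m1 s" using m1(2) tle_lt[OF treeT] by blast
          thus False using anti_lt[OF treeT antiS[OF S] m1(1) True] by blast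
        qed
      qed
    qed
    thus ?thesis using sonsH lt sP by blast
  qed
qed

end



context hyb
begin

abbreviation "HH \<equiv> fhybr F \<phi>"

lemma skelH: "skel HH = hybr TT \<gamma>"
  unfolding skel_def fhybr_def by simp

lemma leafH: "leaf HH x = (if x \<in> fsupp F \<phi> then leaf F x - loss F \<phi>
          else if (\<exists>G \<in> \<phi>. x \<in> impl (skel G))
            then leaf (SOME G. G \<in> \<phi> \<and> x \<in> impl (skel G)) x - loss F \<phi>
          else {})"
  unfolding leaf_def fhybr_def by simp

lemma leafH_supp: "x \<in> SP \<Longrightarrow> leaf HH x = leaf F x - loss F \<phi>"
  unfolding leafH fsupp_def by simp

lemma fg: "G \<in> \<phi> \<Longrightarrow> is_fgraft F G"
  using cf unfolding consistent_fgrafts_def by blast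

lemma leafH_impl: assumes G: "G \<in> \<phi>" and x: "x \<in> impl (skel G)"
  shows "leaf HH x = leaf G x - loss F \<phi>"
proof -
  have S: "skel G \<in> \<gamma>" using G by blast
  have nf: "x \<notin> fsupp F \<phi>" unfolding fsupp_def using impl_nsupp[OF S x] .
  have ex: "\<exists>G' \<in> \<phi>. x \<in> impl (skel G')" using G x by blast
  let ?G = "SOME G. G \<in> \<phi> \<and> x \<in> impl (skel G)"
  have "?G \<in> \<phi> \<and> x \<in> impl (skel ?G)" using someI_ex[of "\<lambda>G. G \<in> \<phi> \<and> x \<in> impl (skel G)"] ex by blast
  hence g1: "?G \<in> \<phi>" "x \<in> impl (skel ?G)" by auto
  have "skel ?G = skel G" using impl_uniq[of "skel ?G" "skel G" x] g1 S x by blast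
  moreover have "inj_on skel \<phi>" using cf unfolding consistent_fgrafts_def by blast
  ultimately have "?G = G" using g1(1) G unfolding inj_on_def by blast
  thus ?thesis unfolding leafH using nf ex by simp
qed

lemma leafH_loss: "leaf HH x \<inter> loss F \<phi> = {}"
  unfolding leafH by auto

lemma sons_cases: assumes S: "S \<in> \<gamma>" and s: "s \<in> sons S x" and xx: "x = zero S \<or> x \<in> impl S"
  shows "s \<in> impl S \<or> s \<in> maxs S"
proof -
  have xs: "tlt S x s" using s sonsS[OF S] by blast
  have sS: "s \<in> nodes S" using tr_nodes[OF treeS[OF S] xs] by blast
  have "s \<noteq> zero S"
  proof (cases "x = zero S")
    case True thus ?thesis using xs tr_irr[OF treeS[OF S]] by blast
  next
    case False
    hence xi: "x \<in> impl S" using xx by blast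
    show ?thesis using nzero_of_lt[OF S xi xs] .
  qed
  thus ?thesis using impl_I[OF sS] by blast
qed

lemma leaf_sons_G: assumes G: "G \<in> \<phi>" and s: "s \<in> sons (skel G) x" and xx: "x = zero (skel G) \<or> x \<in> impl (skel G)"
  shows "leaf HH s = leaf G s - loss F \<phi>"
proof -
  have S: "skel G \<in> \<gamma>" using G by blast
  have "s \<in> impl (skel G) \<or> s \<in> maxs (skel G)" using sons_cases[OF S s xx] .
  thus ?thesis
  proof
    assume "s \<in> impl (skel G)" thus ?thesis using leafH_impl[OF G] by blast
  next
    assume m: "s \<in> maxs (skel G)"
    have "leaf G s = leaf F s" using fg[OF G] m unfolding is_fgraft_def by blast
    thus ?thesis using leafH_supp[OF maxs_supp[OF S m]] by simp
  qed
qed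

lemma main:
  assumes ne: "nonempty_leaves HH" and ps: "\<forall>G \<in> \<phi>. preserves_shoots F G"
  shows "shoots_into HH F"
  unfolding shoots_into_def
proof (intro ballI)
  fix p y assume pH: "p \<in> flesh HH" and yF: "y \<in> scope F p"
  have pl: "p \<notin> loss F \<phi>" using pH leafH_loss unfolding flesh_def by blast
  have yT: "y \<in> nodes TT" and py: "p \<in> leaf F y" using yF unfolding scope_def by auto
  have sne: "\<forall>s \<in> sons (skel HH) x. leaf HH s \<noteq> {}" for x
    using ne unfolding nonempty_leaves_def sons_def by blast
  show "\<exists>x \<in> scope HH p. shoot HH x \<ggreater> shoot F y"
  proof (cases "\<exists>G\<in>\<phi>. y = zero (skel G) \<or> y \<in> expl TT (skel G)")
    case True
    then obtain G where G: "G \<in> \<phi>" and yy: "y = zero (skel G) \<or> y \<in> expl TT (skel G)" by blast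
    let ?S = "skel G"
    have S: "?S \<in> \<gamma>" using G by blast
    have pz: "p \<in> leaf F (zero ?S)"
    proof (cases "y = zero ?S")
      case True thus ?thesis using py by simp
    next
      case False
      hence "tlt TT (zero ?S) y" using yy unfolding expl_def by blast
      hence "leaf F y \<subseteq> leaf F (zero ?S)" using ni zeroT[OF S] yT unfolding nonincreasing_def tle_def by blast
      thus ?thesis using py by blast
    qed
    have "p \<notin> cut F G" using pl G unfolding loss_def by blast
    hence pG: "p \<in> leaf G (zero ?S)" using pz unfolding cut_def by blast
    have pfl: "p \<in> flesh G" using pG zeroS[OF S] unfolding flesh_def by blast
    have yin: "y \<in> scope F p \<inter> ({zero ?S} \<union> expl TT ?S)" using yF yy by blast
    obtain x where x: "x \<in> scope G p" "x \<in> {zero ?S} \<union> impl ?S" and gx: "shoot G x \<ggreater> shoot F y"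
      using ps G pfl yin unfolding preserves_shoots_def by blast
    have px: "p \<in> leaf G x" using x(1) unfolding scope_def by blast
    have xx: "x = zero ?S \<or> x \<in> impl ?S" using x(2) by blast
    have sons_eq: "sons (skel HH) x = sons ?S x"
      using xx sons2[OF S] sons3[OF S] skelH by auto
    have sl: "\<forall>s \<in> sons ?S x. leaf HH s = leaf G s - loss F \<phi>"
      using leaf_sons_G[OF G _ xx] by blast
    have hx: "shoot HH x \<ggreater> shoot G x" using shoot_transfer[OF sons_eq sl sne] .
    have xH: "x \<in> scope HH p"
    proof (cases "x = zero ?S")
      case True
      have zP: "x \<in> SP" using zero_supp[OF S] True by simp
      have "leaf G (zero ?S) \<subseteq> leaf F (zero ?S)" using fg[OF G] unfolding is_fgraft_def by blast
      hence "p \<in> leaf HH x" using leafH_supp[OF zP] px pl True by blast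
      moreover have "x \<in> nodes (skel HH)" using zP skelH nodesH by simp
      ultimately show ?thesis unfolding scope_def by blast
    next
      case False
      hence xi: "x \<in> impl ?S" using xx by blast
      have "p \<in> leaf HH x" using leafH_impl[OF G xi] px pl by blast
      moreover have "x \<in> nodes (skel HH)" using xi S skelH nodesH by auto
      ultimately show ?thesis unfolding scope_def by blast
    qed
    show ?thesis using xH gg_trans[OF hx gx] by blast
  next
    case False
    have yP: "y \<in> SP" using False yT unfolding supp_def by blast
    have nz: "\<forall>S\<in>\<gamma>. y \<noteq> zero S" using False by blast
    have sons_eq: "sons (skel HH) y = sons TT y" using sons1[OF yP nz] skelH by simp
    have sl: "\<forall>s \<in> sons TT y. leaf HH s = leaf F s - loss F \<phi>"
    proof
      fix s assume s: "s \<in> sons TT y"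
      hence sT: "s \<in> nodes TT" unfolding sons_def by blast
      have "s \<in> nodes (skel HH)" using s sons_eq unfolding sons_def by blast
      hence "s \<in> SP \<or> (\<exists>G\<in>\<gamma>. s \<in> impl G)" using skelH nodesH by auto
      hence "s \<in> SP" using sT implT by blast
      thus "leaf HH s = leaf F s - loss F \<phi>" using leafH_supp by blast
    qed
    have hx: "shoot HH y \<ggreater> shoot F y" using shoot_transfer[OF sons_eq sl sne] .
    have "p \<in> leaf HH y" using leafH_supp[OF yP] py pl by blast
    moreover have "y \<in> nodes (skel HH)" using yP skelH nodesH by simp
    ultimately have "y \<in> scope HH p" unfolding scope_def by blast
    thus ?thesis using hx by blast
  qed
qed

end

theorem mainTheorem13:
  fixes F :: "('a, 'b) ftree" and \<phi> :: "('a, 'b) ftree set"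
  assumes "nonincreasing F"
    and "consistent_fgrafts F \<phi>"
    and "nonempty_leaves (fhybr F \<phi>)"
    and "\<forall>G \<in> \<phi>. preserves_shoots F G"
  shows "shoots_into (fhybr F \<phi>) F"
proof -
  interpret hyb F \<phi> using assms(1,2) by unfold_locales
  show ?thesis using main assms(3,4) by blast
qed



end
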